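(* Let $\omega$ be a primitive third root of unity, $S=\mathbb{C}\langle x,y,z\rangle/(x^2,y^2,z^2)$, and for $t\in\mathbb{C}^*$ let $T_t$ be the quotient of $S$ by the two-sided ideal generated by $(zxy+\omega xyz+\omega^2 yzx)+t(yxz+\omega zyx+\omega^2 xzy)$ and $(zxy+\omega^2 xyz+\omega yzx)+t(yxz+\omega^2 zyx+\omega xzy)$; let $M_t=T_t/(g_t)$ with $g_t=(zxy+xyz+yzx)+t(yxz+zyx+xzy)$. If $-t$ is a primitive $n$th root of unity, then $M_t$ is a finite module over its center.
   Context: Grading: $\deg x=\deg y=\deg z=1$. *)

theory Defs
  imports Complex_Main "HOL-Library.Poly_Mapping"
begin

datatype var = X | Y | Z

datatype word = Word "var list"

instantiation word :: monoid_add
begin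
definition zero_word :: word where "zero_word = Word []"
fun plus_word :: "word \<Rightarrow> word \<Rightarrow> word" where
  "plus_word (Word a) (Word b) = Word (a @ b)"
instance
proof
  fix a b c :: word
  show "a + b + c = a + (b + c)" by (cases a; cases b; cases c) simp
  show "0 + a = a" by (cases a) (simp add: zero_word_def)
  show "a + 0 = a" by (cases a) (simp add: zero_word_def)
qed
end

text \<open>Noncommutative polynomials: finitely supported functions on words, with
  convolution product (the monoid algebra of the free monoid).\<close>
type_synonym fralg = "word \<Rightarrow>\<^sub>0 complex"

definition scal :: "complex \<Rightarrow> fralg" where
  "scal c = Poly_Mapping.single (Word []) c"

definition gx :: fralg where "gx = Poly_Mapping.single (Word [X]) 1"
definition gy :: fralg where "gy = Poly_Mapping.single (Word [Y]) 1"
definition gz :: fralg where "gz = Poly_Mapping.single (Word [Z]) 1"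

inductive_set tsideal :: "'a::ring_1 set \<Rightarrow> 'a set" for G :: "'a set" where
  zero: "0 \<in> tsideal G"
| gen: "g \<in> G \<Longrightarrow> a * g * b \<in> tsideal G"
| add: "p \<in> tsideal G \<Longrightarrow> q \<in> tsideal G \<Longrightarrow> p + q \<in> tsideal G"

definition central_mod :: "'a::ring_1 set \<Rightarrow> 'a \<Rightarrow> bool" where
  "central_mod I a \<longleftrightarrow> (\<forall>b. a * b - b * a \<in> I)"

definition finite_over_center :: "'a::ring_1 set \<Rightarrow> bool" where
  "finite_over_center I \<longleftrightarrow>
     (\<exists>F. finite F \<and> (\<forall>a. \<exists>c. (\<forall>m\<in>F. central_mod I (c m)) \<and>
                                a - (\<Sum>m\<in>F. c m * m) \<in> I))"

definition rel1 :: "complex \<Rightarrow> complex \<Rightarrow> fralg" where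
  "rel1 \<omega> t = (gz*gx*gy + scal \<omega> * gx*gy*gz + scal (\<omega>^2) * gy*gz*gx)
     + scal t * (gy*gx*gz + scal \<omega> * gz*gy*gx + scal (\<omega>^2) * gx*gz*gy)"

definition rel2 :: "complex \<Rightarrow> complex \<Rightarrow> fralg" where
  "rel2 \<omega> t = (gz*gx*gy + scal (\<omega>^2) * gx*gy*gz + scal \<omega> * gy*gz*gx)
     + scal t * (gy*gx*gz + scal (\<omega>^2) * gz*gy*gx + scal \<omega> * gx*gz*gy)"

definition gt :: "complex \<Rightarrow> fralg" where
  "gt t = (gz*gx*gy + gx*gy*gz + gy*gz*gx) + scal t * (gy*gx*gz + gz*gy*gx + gx*gz*gy)"

definition Mt_ideal :: "complex \<Rightarrow> complex \<Rightarrow> fralg set" where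
  "Mt_ideal \<omega> t = tsideal {gx*gx, gy*gy, gz*gz, rel1 \<omega> t, rel2 \<omega> t, gt t}"

end

theory Submission
  imports Defs
begin


lemma ts_lmult: "p \<in> tsideal G \<Longrightarrow> c * p \<in> tsideal G"
proof (induction rule: tsideal.induct)
  case zero then show ?case by (simp add: tsideal.zero)
next
  case (gen g a b) then show ?case using tsideal.gen[of g G "c*a" b] by (simp add: mult.assoc)
next
  case (add p q) then show ?case by (simp add: distrib_left tsideal.add)
qed

lemma ts_rmult: "p \<in> tsideal G \<Longrightarrow> p * c \<in> tsideal G"
proof (induction rule: tsideal.induct)
  case zero then show ?case by (simp add: tsideal.zero)
next
  case (gen g a b) then show ?case using tsideal.gen[of g G a "b*c"] by (simp add: mult.assoc)
next
  case (add p q) then show ?case by (simp add: distrib_right tsideal.add)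
qed

lemma ts_gen: "g \<in> G \<Longrightarrow> g \<in> tsideal G"
  using tsideal.gen[of g G 1 1] by simp

lemma ts_uminus: "p \<in> tsideal G \<Longrightarrow> - p \<in> tsideal G"
  using ts_lmult[of p G "-1"] by simp

lemma ts_add: "p \<in> tsideal G \<Longrightarrow> q \<in> tsideal G \<Longrightarrow> p + q \<in> tsideal G"
  by (rule tsideal.add)

lemma ts_diff: "p \<in> tsideal G \<Longrightarrow> q \<in> tsideal G \<Longrightarrow> p - q \<in> tsideal G"
  using ts_add[OF _ ts_uminus] by (metis diff_conv_add_uminus)

lemma ts_zero: "0 \<in> tsideal G" by (rule tsideal.zero)

definition wd :: "var list \<Rightarrow> fralg" where "wd l = Poly_Mapping.single (Word l) 1"

lemma wd_append: "wd (u @ v) = wd u * wd v"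
  by (simp add: wd_def mult_single)

lemma wd_Nil: "wd [] = 1"
  by (simp add: wd_def zero_word_def[symmetric])

lemma scal_wd: "scal c * wd l = Poly_Mapping.single (Word l) c"
  by (simp add: wd_def scal_def mult_single)

lemma scal_mult: "scal a * scal b = scal (a * b)"
  by (simp add: scal_def mult_single)

lemma scal_one: "scal 1 = 1"
  by (simp add: scal_def zero_word_def[symmetric])

lemma scal_uminus: "scal (- a) = - scal a"
  by (simp add: scal_def single_uminus)

lemma update_single: "a \<notin> Poly_Mapping.keys f \<Longrightarrow> Poly_Mapping.update a b f = f + Poly_Mapping.single a b"
  by (rule poly_mapping_eqI) (auto simp: lookup_update lookup_add lookup_single in_keys_iff when_def)

lemma scal_comm: "scal c * p = p * scal c"
proof (induction p rule: update_induct)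
  case const then show ?case by simp
next
  case (update f a b)
  have "scal c * Poly_Mapping.single a b = Poly_Mapping.single a b * scal c"
    by (simp add: scal_def mult_single mult.commute zero_word_def[symmetric])
  with update show ?case by (simp add: update_single distrib_left distrib_right)
qed

lemma gx_wd: "gx = wd [X]" and gy_wd: "gy = wd [Y]" and gz_wd: "gz = wd [Z]"
  by (simp_all add: gx_def gy_def gz_def wd_def)

lemma var_UNIV: "(UNIV :: var set) = {X, Y, Z}"
  using var.exhaust by auto



lemma cm_add: "central_mod I C \<Longrightarrow> central_mod I D \<Longrightarrow> I = tsideal G \<Longrightarrow> central_mod I (C + D)"
  unfolding central_mod_def
proof
  fix b assume c: "\<forall>b. C * b - b * C \<in> I" and d: "\<forall>b. D * b - b * D \<in> I" and i: "I = tsideal G"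
  have "(C + D) * b - b * (C + D) = (C * b - b * C) + (D * b - b * D)"
    by (simp add: algebra_simps)
  then show "(C + D) * b - b * (C + D) \<in> I" using c d i by (simp add: ts_add)
qed

lemma cm_mult: "central_mod I C \<Longrightarrow> central_mod I D \<Longrightarrow> I = tsideal G \<Longrightarrow> central_mod I (C * D)"
  unfolding central_mod_def
proof
  fix b assume c: "\<forall>b. C * b - b * C \<in> I" and d: "\<forall>b. D * b - b * D \<in> I" and i: "I = tsideal G"
  have "C * D * b - b * (C * D) = C * (D * b - b * D) + (C * b - b * C) * D"
    by (simp add: algebra_simps)
  then show "C * D * b - b * (C * D) \<in> I" using c d i
    by (simp add: ts_add ts_lmult ts_rmult)
qed

lemma cm_zero: "I = tsideal G \<Longrightarrow> central_mod I 0"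
  by (simp add: central_mod_def ts_zero)

lemma cm_scal: "I = tsideal G \<Longrightarrow> central_mod I (scal s)"
  by (simp add: central_mod_def scal_comm ts_zero)

lemma cm_gen:
  assumes i: "I = tsideal G" and h: "\<And>v. C * wd [v] - wd [v] * C \<in> I"
  shows "central_mod I C"
proof -
  have w: "C * wd l - wd l * C \<in> I" for l
  proof (induction l)
    case Nil then show ?case by (simp add: wd_Nil i ts_zero)
  next
    case (Cons v l)
    have "wd (v # l) = wd [v] * wd l" using wd_append[of "[v]" l] by simp
    moreover have "C * (wd [v] * wd l) - (wd [v] * wd l) * C
        = (C * wd [v] - wd [v] * C) * wd l + wd [v] * (C * wd l - wd l * C)"
      by (simp add: algebra_simps)
    ultimately show ?case using Cons h i by (simp add: ts_add ts_lmult ts_rmult)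
  qed
  show ?thesis unfolding central_mod_def
  proof
    fix p show "C * p - p * C \<in> I"
    proof (induction p rule: update_induct)
      case const then show ?case by (simp add: i ts_zero)
    next
      case (update f a b)
      obtain l where a: "a = Word l" by (cases a)
      have s: "Poly_Mapping.single a b = scal b * wd l" by (simp add: a scal_wd)
      have "C * (scal b * wd l) - (scal b * wd l) * C = scal b * (C * wd l - wd l * C)"
      proof -
        have "C * (scal b * wd l) = scal b * C * wd l"
          by (metis mult.assoc scal_comm)
        then show ?thesis by (simp add: algebra_simps)
      qed
      hence "C * Poly_Mapping.single a b - Poly_Mapping.single a b * C \<in> I"
        using w[of l] i s by (simp add: ts_lmult)
      with update show ?case
        by (simp add: update_single distrib_left distrib_right i add_diff_add ts_add)
    qed
  qed
qed



definition S6 :: "complex \<Rightarrow> complex \<Rightarrow> complex \<Rightarrow> complex \<Rightarrow> complex \<Rightarrow> complex \<Rightarrow> fralg" where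
  "S6 c1 c2 c3 c4 c5 c6 = Poly_Mapping.single (Word [Z,X,Y]) c1 + Poly_Mapping.single (Word [X,Y,Z]) c2
    + Poly_Mapping.single (Word [Y,Z,X]) c3 + Poly_Mapping.single (Word [Y,X,Z]) c4
    + Poly_Mapping.single (Word [Z,Y,X]) c5 + Poly_Mapping.single (Word [X,Z,Y]) c6"

lemma S6_add: "S6 a1 a2 a3 a4 a5 a6 + S6 b1 b2 b3 b4 b5 b6 = S6 (a1+b1) (a2+b2) (a3+b3) (a4+b4) (a5+b5) (a6+b6)"
  by (simp add: S6_def single_add ac_simps)

lemma scal_single: "scal k * Poly_Mapping.single (Word l) c = Poly_Mapping.single (Word l) (k * c)"
  by (simp add: scal_def mult_single)

lemma S6_scal: "scal k * S6 a1 a2 a3 a4 a5 a6 = S6 (k*a1) (k*a2) (k*a3) (k*a4) (k*a5) (k*a6)"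
  by (simp add: S6_def distrib_left scal_single)

lemma rel1_S6: "rel1 \<omega> t = S6 1 \<omega> (\<omega>^2) t (t*\<omega>) (t*\<omega>^2)"
  by (simp add: rel1_def S6_def gx_def gy_def gz_def scal_def mult_single distrib_left ac_simps)

lemma rel2_S6: "rel2 \<omega> t = S6 1 (\<omega>^2) \<omega> t (t*\<omega>^2) (t*\<omega>)"
  by (simp add: rel2_def S6_def gx_def gy_def gz_def scal_def mult_single distrib_left ac_simps)

lemma gt_S6: "gt t = S6 1 1 1 t t t"
  by (simp add: gt_def S6_def gx_def gy_def gz_def scal_def mult_single distrib_left ac_simps)



locale M =
  fixes \<omega> t :: complex and n :: nat
  assumes w3: "\<omega> ^ 3 = 1" and w1: "\<omega> \<noteq> 1" and t0: "t \<noteq> 0" and n1: "n \<ge> 1"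
    and tn: "(- t) ^ n = 1"
begin

abbreviation "I \<equiv> Mt_ideal \<omega> t"

lemma I_eq: "I = tsideal {gx*gx, gy*gy, gz*gz, rel1 \<omega> t, rel2 \<omega> t, gt t}"
  by (simp add: Mt_ideal_def)

lemma wsum: "1 + \<omega> + \<omega>^2 = 0"
proof -
  have "(\<omega> - 1) * (1 + \<omega> + \<omega>^2) = \<omega>^3 - 1" by (simp add: algebra_simps power2_eq_square power3_eq_cube)
  then have "(\<omega> - 1) * (1 + \<omega> + \<omega>^2) = 0" using w3 by simp
  then show ?thesis using w1 by simp
qed

lemma inI: "rel1 \<omega> t \<in> I" "rel2 \<omega> t \<in> I" "gt t \<in> I" "gx*gx \<in> I" "gy*gy \<in> I" "gz*gz \<in> I"
  by (simp_all add: I_eq ts_gen)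

lemma sq: "wd [a, a] \<in> I"
  using inI(4-6) by (cases a) (simp_all add: gx_wd gy_wd gz_wd wd_append[symmetric])

lemma comb_in: "scal a * rel1 \<omega> t + scal b * rel2 \<omega> t + scal c * gt t \<in> I"
  using inI(1-3) by (simp add: I_eq ts_add ts_lmult)

lemma w2: "\<omega>^2 = -1 - \<omega>" using wsum by (simp add: algebra_simps eq_neg_iff_add_eq_0)

lemma S6_cong: "a1=b1 \<Longrightarrow> a2=b2 \<Longrightarrow> a3=b3 \<Longrightarrow> a4=b4 \<Longrightarrow> a5=b5 \<Longrightarrow> a6=b6 \<Longrightarrow> S6 a1 a2 a3 a4 a5 a6 = S6 b1 b2 b3 b4 b5 b6" by simp

lemma relA: "wd [Z,X,Y] + scal t * wd [Y,X,Z] \<in> I"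
proof -
  have "scal (1/3) * rel1 \<omega> t + scal (1/3) * rel2 \<omega> t + scal (1/3) * gt t = S6 1 0 0 t 0 0"
    unfolding rel1_S6 rel2_S6 gt_S6 S6_scal S6_add
    by (rule S6_cong) (use wsum w3 in \<open>simp add: field_simps; algebra\<close>)+
  then show ?thesis using comb_in[of "1/3" "1/3" "1/3"]
    by (simp add: S6_def wd_def scal_single)
qed

lemma relB: "wd [X,Y,Z] + scal t * wd [Z,Y,X] \<in> I"
proof -
  have "scal (\<omega>^2/3) * rel1 \<omega> t + scal (\<omega>/3) * rel2 \<omega> t + scal (1/3) * gt t = S6 0 1 0 0 t 0"
    unfolding rel1_S6 rel2_S6 gt_S6 S6_scal S6_add
    by (rule S6_cong) (use wsum w3 in \<open>simp add: field_simps; algebra\<close>)+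
  then show ?thesis using comb_in[of "\<omega>^2/3" "\<omega>/3" "1/3"]
    by (simp add: S6_def wd_def scal_single)
qed

lemma relC: "wd [Y,Z,X] + scal t * wd [X,Z,Y] \<in> I"
proof -
  have "scal (\<omega>/3) * rel1 \<omega> t + scal (\<omega>^2/3) * rel2 \<omega> t + scal (1/3) * gt t = S6 0 0 1 0 0 t"
    unfolding rel1_S6 rel2_S6 gt_S6 S6_scal S6_add
    by (rule S6_cong) (use wsum w3 in \<open>simp add: field_simps; algebra\<close>)+
  then show ?thesis using comb_in[of "\<omega>/3" "\<omega>^2/3" "1/3"]
    by (simp add: S6_def wd_def scal_single)
qed

end


definition ab :: "var \<Rightarrow> var \<Rightarrow> nat \<Rightarrow> var list" where
  "ab a b k = concat (replicate k [a, b])"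

lemma ab_0[simp]: "ab a b 0 = []" by (simp add: ab_def)
lemma ab_Suc: "ab a b (Suc k) = a # b # ab a b k" by (simp add: ab_def)
lemma ab_Suc2: "ab a b (Suc k) = ab a b k @ [a, b]"
  by (induction k) (simp_all add: ab_Suc)
lemma ab_shift: "a # ab b a k = ab a b k @ [a]"
  by (induction k) (simp_all add: ab_Suc)
lemma ab_add: "ab a b (k + m) = ab a b k @ ab a b m"
  by (induction k) (simp_all add: ab_Suc)
lemma length_ab[simp]: "length (ab a b k) = 2 * k"
  by (induction k) (simp_all add: ab_Suc)

lemma third: "(a::var) \<noteq> b \<Longrightarrow> \<exists>c. c \<noteq> a \<and> c \<noteq> b \<and> (\<forall>v. v = a \<or> v = b \<or> v = c)"
proof -
  have all: "\<forall>v. v = X \<or> v = Y \<or> v = Z" by (metis var.exhaust)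
  assume "a \<noteq> b"
  then show ?thesis
    apply (intro exI[of _ "if a \<noteq> X \<and> b \<noteq> X then X else if a \<noteq> Y \<and> b \<noteq> Y then Y else Z"])
    using all by (cases a; cases b) auto
qed

context M begin

definition SIMs :: "complex \<Rightarrow> var list \<Rightarrow> var list \<Rightarrow> bool" where
  "SIMs s w v \<longleftrightarrow> wd w - scal s * wd v \<in> I"

definition Zr :: "var list \<Rightarrow> bool" where "Zr w \<longleftrightarrow> wd w \<in> I"

definition Good :: "var list \<Rightarrow> bool" where
  "Good w \<longleftrightarrow> (\<exists>C w'. central_mod I C \<and> length w' < length w \<and> wd w - C * wd w' \<in> I)"

lemma pair:
  assumes "wd p + scal t * wd q \<in> I"
  shows "(\<exists>l. l^n = 1 \<and> SIMs l p q) \<and> (\<exists>l. l^n = 1 \<and> SIMs l q p)"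
proof
  show "\<exists>l. l^n = 1 \<and> SIMs l p q"
    using assms tn by (intro exI[of _ "-t"]) (simp add: SIMs_def scal_uminus)
  have "scal (1/t) * (wd p + scal t * wd q) = wd q - scal (-1/t) * wd p"
    using t0 by (simp add: distrib_left mult.assoc[symmetric] scal_mult scal_one scal_uminus)
  moreover have "(-1/t)^n = 1"
  proof -
    have "(-1/t) = 1/(-t)" by simp
    then show ?thesis using tn by (simp only: power_one_over) simp
  qed
  ultimately show "\<exists>l. l^n = 1 \<and> SIMs l q p"
    using assms ts_lmult[of "wd p + scal t * wd q" _ "scal (1/t)"] unfolding SIMs_def I_eq
    by (intro exI[of _ "-1/t"]) metis
qed

lemma swap:
  assumes "a \<noteq> b" "b \<noteq> c" "a \<noteq> c"
  shows "\<exists>l. l^n = 1 \<and> SIMs l [a,b,c] [c,b,a]"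
  using pair[OF relA] pair[OF relB] pair[OF relC] assms
  by (cases a; cases b; cases c) auto

lemma SIMs_ctx: "SIMs s v v' \<Longrightarrow> SIMs s (u @ v @ u') (u @ v' @ u')"
proof -
  assume h: "SIMs s v v'"
  have "wd (u @ v @ u') - scal s * wd (u @ v' @ u') = wd u * (wd v - scal s * wd v') * wd u'"
  proof -
    have "scal s * (wd u * wd v' * wd u') = wd u * (scal s * wd v') * wd u'"
      by (metis mult.assoc scal_comm)
    then show ?thesis by (simp add: wd_append algebra_simps)
  qed
  then show ?thesis using h by (simp add: SIMs_def I_eq ts_lmult ts_rmult)
qed

lemma SIMs_trans: "SIMs s w v \<Longrightarrow> SIMs r v x \<Longrightarrow> SIMs (s * r) w x"
proof -
  assume a: "SIMs s w v" and b: "SIMs r v x"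
  have eq: "scal (s*r) * wd x = scal s * (scal r * wd x)" by (simp add: scal_mult[symmetric] mult.assoc)
  have "wd w - scal (s * r) * wd x = (wd w - scal s * wd v) + scal s * (wd v - scal r * wd x)"
    unfolding eq by (simp add: algebra_simps)
  then show ?thesis using a b unfolding SIMs_def I_eq by (metis ts_lmult ts_add)
qed

lemma SIMs_refl: "SIMs 1 w w" by (simp add: SIMs_def scal_one I_eq ts_zero)

lemma Zr_ctx: "Zr v \<Longrightarrow> Zr (u @ v @ u')"
  by (simp add: Zr_def wd_append I_eq ts_lmult ts_rmult)

lemma Zr_sq: "Zr (u @ [a, a] @ v)"
  using Zr_ctx[of "[a,a]" u v] sq by (simp add: Zr_def)

lemma Zr_sim: "SIMs s w v \<Longrightarrow> Zr v \<Longrightarrow> Zr w"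
proof -
  assume a: "SIMs s w v" and b: "Zr v"
  have "wd w = (wd w - scal s * wd v) + scal s * wd v" by simp
  then show ?thesis using a b unfolding SIMs_def Zr_def I_eq by (metis ts_add ts_lmult)
qed

lemma Zpat: "a \<noteq> b \<Longrightarrow> b \<noteq> c \<Longrightarrow> a \<noteq> c \<Longrightarrow> Zr (a # ab b c k @ [a])"
proof (induction k)
  case 0 then show ?case using Zr_sq[of "[]" a "[]"] by simp
next
  case (Suc k)
  obtain l where l: "SIMs l [a,b,c] [c,b,a]" using swap Suc.prems by blast
  have "SIMs l ([] @ [a,b,c] @ (ab b c k @ [a])) ([] @ [c,b,a] @ (ab b c k @ [a]))"
    by (rule SIMs_ctx[OF l])
  moreover have "Zr ([c,b] @ (a # ab b c k @ [a]) @ [])" using Suc by (intro Zr_ctx) simp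
  ultimately show ?case by (simp add: ab_Suc Zr_sim)
qed

lemma cm_I: "central_mod I C \<Longrightarrow> C * b - b * C \<in> I" by (simp add: central_mod_def)

lemma Good_Z: "Zr w \<Longrightarrow> w \<noteq> [] \<Longrightarrow> Good w"
  unfolding Good_def Zr_def
  by (rule exI[of _ 0], rule exI[of _ "[]"]) (simp add: cm_zero I_eq)

lemma Good_ctx: "Good v \<Longrightarrow> Good (u @ v @ u')"
proof -
  assume "Good v"
  then obtain C w' where c: "central_mod I C" and l: "length w' < length v" and e: "wd v - C * wd w' \<in> I"
    unfolding Good_def by blast
  have "wd (u @ v @ u') - C * wd (u @ w' @ u') = wd u * (wd v - C * wd w') * wd u' - (C * wd u - wd u * C) * wd w' * wd u'"
    by (simp add: wd_append algebra_simps)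
  moreover have "wd u * (wd v - C * wd w') * wd u' \<in> I" using e by (simp add: I_eq ts_lmult ts_rmult)
  moreover have "(C * wd u - wd u * C) * wd w' * wd u' \<in> I" using cm_I[OF c] by (simp add: I_eq ts_rmult)
  ultimately have "wd (u @ v @ u') - C * wd (u @ w' @ u') \<in> I" by (simp add: I_eq ts_diff)
  then show ?thesis unfolding Good_def using c l by (intro exI[of _ C] exI[of _ "u @ w' @ u'"]) simp
qed

lemma Good_sim: "SIMs s w v \<Longrightarrow> length v = length w \<Longrightarrow> Good v \<Longrightarrow> Good w"
proof -
  assume a: "SIMs s w v" and len: "length v = length w" and "Good v"
  then obtain C w' where c: "central_mod I C" and l: "length w' < length v" and e: "wd v - C * wd w' \<in> I"
    unfolding Good_def by blast
  have "wd w - (scal s * C) * wd w' = (wd w - scal s * wd v) + scal s * (wd v - C * wd w')"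
    by (simp add: algebra_simps mult.assoc)
  then have "wd w - (scal s * C) * wd w' \<in> I" using a e unfolding SIMs_def I_eq by (metis ts_add ts_lmult)
  moreover have "central_mod I (scal s * C)" using c by (intro cm_mult[OF cm_scal _ I_eq] ) (auto simp: I_eq)
  ultimately show ?thesis unfolding Good_def using l len by (intro exI[of _ "scal s * C"] exI[of _ w']) simp
qed

end


definition pw :: "var \<Rightarrow> var list \<Rightarrow> var list" where
  "pw b qs = concat (map (\<lambda>q. [q, b]) qs)"

lemma pw_Nil[simp]: "pw b [] = []" by (simp add: pw_def)
lemma pw_Cons[simp]: "pw b (q # r) = q # b # pw b r" by (simp add: pw_def)
lemma pw_append: "pw b (xs @ ys) = pw b xs @ pw b ys" by (simp add: pw_def)
lemma pw_rep: "pw b (replicate k a) = ab a b k" by (induction k) (simp_all add: ab_Suc)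
lemma length_pw[simp]: "length (pw b qs) = 2 * length qs" by (induction qs) simp_all

lemma count_two: "set qs \<subseteq> {a, c} \<Longrightarrow> a \<noteq> c \<Longrightarrow> count_list qs a + count_list qs c = length qs"
  by (induction qs) auto

context M begin

definition Cab :: "var \<Rightarrow> var \<Rightarrow> fralg" where
  "Cab a b = wd (ab a b n) + wd (ab b a n)"

lemma cz:
  assumes "c \<noteq> a" "c \<noteq> b" "a \<noteq> b"
  shows "\<exists>l. l^n = 1 \<and> (\<forall>k. SIMs (l^k) (c # ab a b k) (ab b a k @ [c]))"
proof -
  obtain l where l1: "l^n = 1" and l: "SIMs l [c,a,b] [b,a,c]" using swap assms by blast
  have "SIMs (l^k) (c # ab a b k) (ab b a k @ [c])" for k
  proof (induction k)
    case 0 then show ?case using SIMs_refl by simp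
  next
    case (Suc k)
    have a: "SIMs l (c # a # b # ab a b k) (b # a # c # ab a b k)" using SIMs_ctx[OF l, of "[]" "ab a b k"] by simp
    have b: "SIMs (l^k) (b # a # c # ab a b k) (b # a # ab b a k @ [c])"
      using SIMs_ctx[OF Suc, of "[b,a]" "[]"] by simp
    from SIMs_trans[OF a b] show ?case by (simp add: ab_Suc)
  qed
  with l1 show ?thesis by blast
qed

lemma Cab_sym: "Cab a b = Cab b a" by (simp add: Cab_def add.commute)

lemma Zr_aab: "a \<noteq> b \<Longrightarrow> Zr (a # ab a b n)" and Zr_aba: "Zr (ab b a n @ [a])"
proof -
  obtain m where m: "n = Suc m" using n1 by (cases n) auto
  show "Zr (a # ab a b n)" using Zr_sq[of "[]" a "b # ab a b m"] by (simp add: m ab_Suc)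
  show "Zr (ab b a n @ [a])" using Zr_sq[of "ab b a m @ [b]" a "[]"] by (simp add: m ab_Suc2)
qed

lemma Cab_a: assumes "a \<noteq> b" shows "Cab a b * wd [a] - wd [a] * Cab a b \<in> I"
proof -
  have "Cab a b * wd [a] - wd [a] * Cab a b = wd (ab b a n @ [a]) - wd (a # ab a b n)"
    by (simp add: Cab_def distrib_left distrib_right wd_append[symmetric] ab_shift)
  then show ?thesis using Zr_aab[OF assms] Zr_aba[of b a] unfolding Zr_def I_eq by (metis ts_diff)
qed

lemma Cab_c: assumes "c \<noteq> a" "c \<noteq> b" "a \<noteq> b" shows "Cab a b * wd [c] - wd [c] * Cab a b \<in> I"
proof -
  obtain l where l1: "l^n = 1" and l: "SIMs (l^n) (c # ab a b n) (ab b a n @ [c])" using cz[OF assms] by blast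
  obtain r where r1: "r^n = 1" and r: "SIMs (r^n) (c # ab b a n) (ab a b n @ [c])" using cz[of c b a] assms by blast
  have e1: "wd (c # ab a b n) - wd (ab b a n @ [c]) \<in> I" using l l1 by (simp add: SIMs_def scal_one)
  have e2: "wd (c # ab b a n) - wd (ab a b n @ [c]) \<in> I" using r r1 by (simp add: SIMs_def scal_one)
  have "Cab a b * wd [c] - wd [c] * Cab a b = - ((wd (c # ab a b n) - wd (ab b a n @ [c])) + (wd (c # ab b a n) - wd (ab a b n @ [c])))"
    by (simp add: Cab_def distrib_left distrib_right wd_append[symmetric] algebra_simps)
  then show ?thesis using e1 e2 unfolding I_eq by (metis ts_add ts_uminus)
qed

lemma cm_Cab: assumes "a \<noteq> b" shows "central_mod I (Cab a b)"
proof (rule cm_gen[OF I_eq])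
  fix v
  obtain c where c: "c \<noteq> a" "c \<noteq> b" "\<forall>v. v = a \<or> v = b \<or> v = c" using third[OF assms] by blast
  then consider "v = a" | "v = b" | "v = c" by blast
  then show "Cab a b * wd [v] - wd [v] * Cab a b \<in> I"
  proof cases
    case 1 then show ?thesis using Cab_a[OF assms] by simp
  next
    case 2 then show ?thesis using Cab_a[of b a] assms by (simp add: Cab_sym)
  next
    case 3 then show ?thesis using Cab_c c assms by simp
  qed
qed

lemma Good_alt: assumes "a \<noteq> b" shows "Good (ab a b n @ [a])"
proof -
  have "wd (ab a b n @ [a]) - Cab a b * wd [a] = - wd (ab b a n @ [a])"
    by (simp add: Cab_def distrib_right wd_append[symmetric])
  then have "wd (ab a b n @ [a]) - Cab a b * wd [a] \<in> I"
    using Zr_aba[of b a] unfolding Zr_def I_eq by (metis ts_uminus)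
  then show ?thesis unfolding Good_def using cm_Cab[OF assms] n1
    by (intro exI[of _ "Cab a b"] exI[of _ "[a]"]) simp
qed

lemma swap_block: assumes "a \<noteq> b" "b \<noteq> c" "a \<noteq> c"
  shows "\<exists>s. SIMs s (ab a b k @ [c,b]) ([c,b] @ ab a b k)"
proof (induction k)
  case 0 then show ?case using SIMs_refl by auto
next
  case (Suc k)
  then obtain s where s: "SIMs s (ab a b k @ [c,b]) ([c,b] @ ab a b k)" by blast
  obtain l where l: "SIMs l [a,b,c] [c,b,a]" using swap assms by blast
  have 1: "SIMs s (a # b # ab a b k @ [c,b]) (a # b # c # b # ab a b k)" using SIMs_ctx[OF s, of "[a,b]" "[]"] by simp
  have 2: "SIMs l (a # b # c # b # ab a b k) (c # b # a # b # ab a b k)" using SIMs_ctx[OF l, of "[]" "b # ab a b k"] by simp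
  from SIMs_trans[OF 1 2] show ?case by (auto simp: ab_Suc)
qed

lemma pivot_good:
  assumes "a \<noteq> b" "b \<noteq> c" "a \<noteq> c"
  shows "set qs \<subseteq> {a, c} \<Longrightarrow> n + 1 \<le> k + count_list qs a \<Longrightarrow> Good (ab a b k @ pw b qs)"
proof (induction qs arbitrary: k)
  case Nil
  then have "n + 1 \<le> k" by simp
  then have "\<exists>m. k = n + Suc m" by presburger
  then obtain m where m: "k = n + Suc m" by blast
  have "Good ([] @ (ab a b n @ [a]) @ (b # ab a b m))" by (rule Good_ctx[OF Good_alt[OF assms(1)]])
  moreover have "ab a b k = ab a b n @ a # b # ab a b m" by (simp only: m ab_add ab_Suc)
  ultimately show ?case by simp
next
  case (Cons q r)
  show ?case
  proof (cases "q = a")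
    case True
    have "set r \<subseteq> {a, c}" using Cons.prems(1) by simp
    moreover have "n + 1 \<le> Suc k + count_list r a" using Cons.prems(2) True by simp
    ultimately have "Good (ab a b (Suc k) @ pw b r)" by (rule Cons.IH)
    then show ?thesis using True by (simp add: ab_Suc2)
  next
    case False
    then have q: "q = c" using Cons.prems by auto
    have "set r \<subseteq> {a, c}" using Cons.prems(1) by simp
    moreover have "n + 1 \<le> k + count_list r a" using Cons.prems(2) q assms(3) by simp
    ultimately have "Good (ab a b k @ pw b r)" by (rule Cons.IH)
    then have g: "Good ([c,b] @ (ab a b k @ pw b r) @ [])" by (rule Good_ctx)
    obtain s where s: "SIMs s (ab a b k @ [c,b]) ([c,b] @ ab a b k)" using swap_block assms by blast
    have "SIMs s (ab a b k @ c # b # pw b r) (c # b # ab a b k @ pw b r)" using SIMs_ctx[OF s, of "[]" "pw b r"] by simp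
    moreover have "Good (c # b # ab a b k @ pw b r)" using g by simp
    ultimately show ?thesis using q by (auto intro: Good_sim[of s])
  qed
qed

end


fun piv :: "var \<Rightarrow> var list \<Rightarrow> bool" where
  "piv b (x # y # r) = ((x = b \<or> y = b) \<and> piv b (y # r))"
| "piv b _ = True"

context M begin

lemma Lp:
  assumes d: "x \<noteq> y" "y \<noteq> b" "x \<noteq> b"
  shows "piv b (y # r) \<Longrightarrow> Zr (x # ab y b k @ y # r) \<or> piv y (y # r)"
proof (induction r arbitrary: k rule: induct_list012)
  case 1 then show ?case by simp
next
  case (2 z) then show ?case by simp
next
  case (3 z q r)
  have zb: "z = b" using 3(3) d by simp
  have pq: "piv b (q # r)" using 3(3) zb by simp
  obtain c where c: "\<forall>v. v = x \<or> v = y \<or> v = c" using third[OF d(1)] by blast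
  have "q = x \<or> q = y \<or> q = b" using c d by metis
  then consider "q = b" | "q = y" | "q = x" by blast
  then show ?case
  proof cases
    case 1
    have "Zr ((x # ab y b k @ [y]) @ [b, b] @ r)" by (rule Zr_sq)
    then show ?thesis using 1 zb by simp
  next
    case 2
    have "Zr (x # ab y b (Suc k) @ y # r) \<or> piv y (y # r)" using 3(1)[of "Suc k"] pq 2 by simp
    then show ?thesis using 2 zb by (auto simp: ab_Suc2)
  next
    case 3
    have "Zr ([] @ (x # ab y b (Suc k) @ [x]) @ r)" by (rule Zr_ctx[OF Zpat[OF d(1) d(2) d(3)]])
    then show ?thesis using 3 zb by (simp add: ab_Suc2)
  qed
qed

lemma struct_lem: "Zr w \<or> (\<exists>b. piv b w)"
proof (induction w)
  case Nil then show ?case by auto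
next
  case (Cons x w)
  show ?case
  proof (cases "Zr w")
    case True
    then have "Zr ([x] @ w @ [])" by (rule Zr_ctx)
    then show ?thesis by simp
  next
    case False
    then obtain b where p: "piv b w" using Cons by blast
    show ?thesis
    proof (cases w)
      case Nil then show ?thesis by auto
    next
      case (Cons y r)
      show ?thesis
      proof (cases "x = b \<or> y = b")
        case True then show ?thesis using p Cons by auto
      next
        case nb: False
        show ?thesis
        proof (cases "x = y")
          case True
          then show ?thesis using Zr_sq[of "[]" x r] Cons by simp
        next
          case False
          then have "Zr (x # ab y b 0 @ y # r) \<or> piv y (y # r)"
            using Lp[of x y b r 0] nb p Cons by simp
          then show ?thesis using Cons by auto
        qed
      qed
    qed
  qed
qed

lemma decomp:
  "piv b w \<Longrightarrow> Zr w \<or> (\<exists>u qs v. w = u @ pw b qs @ v \<and> length u \<le> 1 \<and> length v \<le> 1)"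
proof (induction w rule: induct_list012)
  case 1 then show ?case by (intro disjI2 exI[of _ "[]"]) simp
next
  case (2 x) then show ?case by (intro disjI2 exI[of _ "[x]"] exI[of _ "[]"]) simp
next
  case (3 x y r)
  have xy: "x = b \<or> y = b" and p: "piv b (y # r)" using 3(3) by auto
  show ?case
  proof (cases "Zr (y # r)")
    case True
    then have "Zr ([x] @ (y # r) @ [])" by (rule Zr_ctx)
    then show ?thesis by simp
  next
    case False
    then obtain u qs v where e: "y # r = u @ pw b qs @ v" and lu: "length u \<le> 1" and lv: "length v \<le> 1"
      using 3(2)[OF p] by blast
    show ?thesis
    proof (cases "y = b")
      case yb: True
      show ?thesis
      proof (cases "x = b")
        case True then show ?thesis using Zr_sq[of "[]" b r] yb by simp
      next
        case xb: False
        show ?thesis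
        proof (cases u)
          case Nil
          show ?thesis
          proof (cases qs)
            case Nil
            then have "r = []" using e lv \<open>u = []\<close> by (cases v) auto
            then show ?thesis using yb by (intro disjI2 exI[of _ "[]"] exI[of _ "[x]"] exI[of _ "[]"]) simp
          next
            case (Cons q qs')
            then have "y # r = b # b # pw b qs' @ v" using e \<open>u = []\<close> yb by simp
            then have "Zr (y # r)" using Zr_sq[of "[]" b "pw b qs' @ v"] by simp
            then show ?thesis using False by simp
          qed
        next
          case (Cons u0 u')
          then have "u' = []" using lu by simp
          then have "r = pw b qs @ v" using e Cons by simp
          then show ?thesis using yb lv
            by (intro disjI2 exI[of _ "[]"] exI[of _ "x # qs"] exI[of _ v]) simp
        qed
      qed
    next
      case ynb: False
      then have xb: "x = b" using xy by simp
      show ?thesis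
      proof (cases u)
        case Nil
        show ?thesis
        proof (cases qs)
          case Nil
          then have "r = []" using e lv \<open>u = []\<close> by (cases v) auto
          then show ?thesis using xb by (intro disjI2 exI[of _ "[b]"] exI[of _ "[]"] exI[of _ "[y]"]) simp
        next
          case (Cons q qs')
          then have "y = q" "r = b # pw b qs' @ v" using e \<open>u = []\<close> by simp_all
          then show ?thesis using xb lv
            by (intro disjI2 exI[of _ "[b]"] exI[of _ "y # qs'"] exI[of _ v]) simp
        qed
      next
        case (Cons u0 u')
        then have u: "u' = []" using lu by simp
        then have r: "r = pw b qs @ v" using e Cons by simp
        show ?thesis
        proof (cases qs)
          case Nil
          show ?thesis
          proof (cases v)
            case Nil
            then show ?thesis using r \<open>qs = []\<close> xb
              by (intro disjI2 exI[of _ "[b]"] exI[of _ "[]"] exI[of _ "[y]"]) simp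
          next
            case (Cons z v')
            then have "v' = []" using lv by simp
            then have "r = [z]" using r \<open>qs = []\<close> Cons by simp
            then have "z = b" using p ynb by simp
            then show ?thesis using \<open>r = [z]\<close> xb
              by (intro disjI2 exI[of _ "[b]"] exI[of _ "[y]"] exI[of _ "[]"]) simp
          qed
        next
          case (Cons q qs')
          then have "r = q # b # pw b qs' @ v" using r by simp
          then have "q = b" using p ynb by simp
          then have "Zr ([x, y] @ [b, b] @ (pw b qs' @ v))" by (intro Zr_sq)
          then show ?thesis using \<open>r = q # b # pw b qs' @ v\<close> \<open>q = b\<close> by simp
        qed
      qed
    qed
  qed
qed

lemma pw_mem: "b \<in> set qs \<Longrightarrow> Zr (pw b qs)"
proof -
  assume "b \<in> set qs"
  then obtain xs ys where "qs = xs @ b # ys" by (meson split_list)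
  then show ?thesis using Zr_sq[of "pw b xs" b "pw b ys"] by (simp add: pw_append)
qed

lemma long_good: "4 * n + 4 \<le> length w \<Longrightarrow> Good w"
proof -
  assume len: "4 * n + 4 \<le> length w"
  then have ne: "w \<noteq> []" by auto
  show ?thesis
  proof (cases "Zr w")
    case True then show ?thesis using Good_Z ne by simp
  next
    case nz: False
    then obtain b where "piv b w" using struct_lem by blast
    then obtain u qs v where e: "w = u @ pw b qs @ v" and lu: "length u \<le> 1" and lv: "length v \<le> 1"
      using decomp nz by blast
    have lq: "2 * n + 1 \<le> length qs" using len e lu lv by simp
    show ?thesis
    proof (cases "b \<in> set qs")
      case True
      then have "Zr w" using e pw_mem Zr_ctx by blast
      then show ?thesis using nz by simp
    next
      case False
      define a where "a = (if b = X then Y else X)"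
      have ab: "a \<noteq> b" by (simp add: a_def)
      obtain c where c: "c \<noteq> a" "c \<noteq> b" "\<forall>v. v = a \<or> v = b \<or> v = c" using third[OF ab] by blast
      have sq: "set qs \<subseteq> {a, c}" using c False by blast
      have cnt: "count_list qs a + count_list qs c = length qs" using count_two[OF sq] c by simp
      have "Good (pw b qs)"
      proof (cases "n + 1 \<le> count_list qs a")
        case True
        then show ?thesis using pivot_good[of a b c qs 0] ab c sq by simp
      next
        case False
        then have "n + 1 \<le> count_list qs c" using cnt lq by simp
        moreover have "set qs \<subseteq> {c, a}" using sq by blast
        ultimately show ?thesis using pivot_good[of c b a qs 0] ab c by simp
      qed
      then show ?thesis using e Good_ctx by simp
    qed
  qed
qed

end


context M begin

definition FF :: "fralg set" where "FF = wd ` {w. length w < 4 * n + 4}"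

lemma finite_FF: "finite FF"
proof -
  have "finite (UNIV :: var set)" by (simp add: var_UNIV)
  then have "finite {xs :: var list. set xs \<subseteq> UNIV \<and> length xs \<le> 4 * n + 4}"
    by (rule finite_lists_length_le)
  then have "finite {w :: var list. length w < 4 * n + 4}"
    by (rule rev_finite_subset) auto
  then show ?thesis unfolding FF_def by simp
qed

lemma word_span: "\<exists>c. (\<forall>m\<in>FF. central_mod I (c m)) \<and> wd w - (\<Sum>m\<in>FF. c m * m) \<in> I"
proof (induction w rule: measure_induct_rule[of length])
  case (less w)
  show ?case
  proof (cases "length w < 4 * n + 4")
    case True
    have mem: "wd w \<in> FF" using True unfolding FF_def by blast
    have "(\<Sum>m\<in>FF. (if m = wd w then 1 else 0) * m) = (\<Sum>m\<in>FF. if m = wd w then m else 0)"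
      by (rule sum.cong) auto
    also have "\<dots> = wd w" using finite_FF mem by simp
    finally have "wd w - (\<Sum>m\<in>FF. (if m = wd w then 1 else 0) * m) = 0" by simp
    moreover have "\<forall>m\<in>FF. central_mod I (if m = wd w then 1 else 0)"
      using cm_scal[OF I_eq, of 1] cm_zero[OF I_eq] by (simp add: scal_one)
    ultimately show ?thesis by (intro exI[of _ "\<lambda>m. if m = wd w then 1 else 0"]) (simp add: I_eq ts_zero)
  next
    case False
    then have "Good w" by (intro long_good) simp
    then obtain C w' where c: "central_mod I C" and l: "length w' < length w" and e: "wd w - C * wd w' \<in> I"
      unfolding Good_def by blast
    obtain c' where c': "\<forall>m\<in>FF. central_mod I (c' m)" and e': "wd w' - (\<Sum>m\<in>FF. c' m * m) \<in> I"
      using less l by blast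
    have se: "(\<Sum>m\<in>FF. (C * c' m) * m) = C * (\<Sum>m\<in>FF. c' m * m)"
      by (simp add: sum_distrib_left mult.assoc)
    have eq: "wd w - (\<Sum>m\<in>FF. (C * c' m) * m) = (wd w - C * wd w') + C * (wd w' - (\<Sum>m\<in>FF. c' m * m))"
      unfolding se by (simp add: right_diff_distrib)
    have mem: "(wd w - C * wd w') + C * (wd w' - (\<Sum>m\<in>FF. c' m * m)) \<in> I"
      using e ts_lmult[OF e'[unfolded I_eq], of C] unfolding I_eq by (rule ts_add)
    have "wd w - (\<Sum>m\<in>FF. (C * c' m) * m) \<in> I" unfolding eq by (rule mem)
    moreover have "\<forall>m\<in>FF. central_mod I (C * c' m)"
    proof
      fix m assume "m \<in> FF"
      then have "central_mod I (c' m)" using c' by blast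
      then show "central_mod I (C * c' m)" by (rule cm_mult[OF c _ I_eq])
    qed
    ultimately show ?thesis by (intro exI[of _ "\<lambda>m. C * c' m"] conjI) simp_all
  qed
qed

lemma span: "\<exists>c. (\<forall>m\<in>FF. central_mod I (c m)) \<and> p - (\<Sum>m\<in>FF. c m * m) \<in> I"
proof (induction p rule: update_induct)
  case const
  show ?case using cm_zero[OF I_eq] by (intro exI[of _ "\<lambda>_. 0"]) (simp add: I_eq ts_zero)
next
  case (update f a b)
  obtain l where a: "a = Word l" by (cases a)
  obtain c1 where c1: "\<forall>m\<in>FF. central_mod I (c1 m)" and e1: "f - (\<Sum>m\<in>FF. c1 m * m) \<in> I"
    using update by blast
  obtain c2 where c2: "\<forall>m\<in>FF. central_mod I (c2 m)" and e2: "wd l - (\<Sum>m\<in>FF. c2 m * m) \<in> I"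
    using word_span by blast
  have s: "Poly_Mapping.single a b = scal b * wd l" by (simp add: a scal_wd)
  have "Poly_Mapping.update a b f - (\<Sum>m\<in>FF. (c1 m + scal b * c2 m) * m)
      = (f - (\<Sum>m\<in>FF. c1 m * m)) + scal b * (wd l - (\<Sum>m\<in>FF. c2 m * m))"
  proof -
    have se: "(\<Sum>m\<in>FF. (c1 m + scal b * c2 m) * m) = (\<Sum>m\<in>FF. c1 m * m) + scal b * (\<Sum>m\<in>FF. c2 m * m)"
      by (simp add: distrib_right sum.distrib sum_distrib_left mult.assoc)
    show ?thesis unfolding se using update(1) s by (simp add: update_single right_diff_distrib)
  qed
  moreover have "(f - (\<Sum>m\<in>FF. c1 m * m)) + scal b * (wd l - (\<Sum>m\<in>FF. c2 m * m)) \<in> I"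
    using e1 ts_lmult[OF e2[unfolded I_eq], of "scal b"] unfolding I_eq by (rule ts_add)
  ultimately have "Poly_Mapping.update a b f - (\<Sum>m\<in>FF. (c1 m + scal b * c2 m) * m) \<in> I"
    by (simp only:)
  moreover have "\<forall>m\<in>FF. central_mod I (c1 m + scal b * c2 m)"
  proof
    fix m assume "m \<in> FF"
    then have 1: "central_mod I (c1 m)" and 2: "central_mod I (c2 m)" using c1 c2 by blast+
    have "central_mod I (scal b * c2 m)" by (rule cm_mult[OF cm_scal[OF I_eq] 2 I_eq])
    then show "central_mod I (c1 m + scal b * c2 m)" by (rule cm_add[OF 1 _ I_eq])
  qed
  ultimately show ?case by (intro exI[of _ "\<lambda>m. c1 m + scal b * c2 m"]) simp
qed

lemma main: "finite_over_center I"
  unfolding finite_over_center_def using finite_FF span by blast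

end

theorem mainTheorem13:
  fixes \<omega> t :: complex and n :: nat
  assumes "\<omega> ^ 3 = 1" and "\<omega> \<noteq> 1"
    and "t \<noteq> 0"
    and "n \<ge> 1" and "(- t) ^ n = 1" and "\<forall>k. 0 < k \<and> k < n \<longrightarrow> (- t) ^ k \<noteq> 1"
  shows "finite_over_center (Mt_ideal \<omega> t)"
proof -
  interpret M \<omega> t n using assms by unfold_locales auto
  show ?thesis by (rule main)
qed

end
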